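(* Let $g:\mathbb{R}^n\to\mathbb{R}^m$ be twice continuously differentiable, $K\subseteq\mathbb{R}^m$ closed, $C:=g^{-1}(K)$, $\bar x\in C$ and $d\in T_C(\bar x)$. Then $$T_C^2(\bar x;d)\subseteq\{w\mid \nabla g(\bar x)w+\nabla^2g(\bar x)(d,d)\in T_K^2(g(\bar x);\nabla g(\bar x)d)\},\qquad T_C^{''}(\bar x;d)\subseteq\{w\mid \nabla g(\bar x)w\in T_K^{''}(g(\bar x);\nabla g(\bar x)d)\}.$$ If in addition MSCQ holds at $\bar x$ in direction $d$ for the system $g(x)\in K$ with modulus $\kappa$, then both inclusions hold as equalities, and for all $w\in\mathbb{R}^n$ $$\mathrm{dist}(w,T_C^2(\bar x;d))\le\kappa\,\mathrm{dist}\big(\nabla g(\bar x)w+\nabla^2g(\bar x)(d,d),T_K^2(g(\bar x);\nabla g(\bar x)d)\big),$$ $$\mathrm{dist}(w,T_C^{''}(\bar x;d))\le\kappa\,\mathrm{dist}\big(\nabla g(\bar x)w,T_K^{''}(g(\bar x);\nabla g(\bar x)d)\big).$$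
   Context: $\nabla^2g(\bar x)(d,d):=(d^T\nabla^2g_1(\bar x)d,\dots,d^T\nabla^2g_m(\bar x)d)$. $T_S(\bar x)$ is the Bouligand tangent cone; $T_S^2(\bar x;d):=\{w\mid \exists t_k\downarrow 0,\ w_k\to w,\ \bar x+t_kd+\tfrac12 t_k^2w_k\in S\}$; $T_S^{''}(\bar x;d):=\{w\mid \exists (t_k,r_k)\downarrow(0,0),\ w_k\to w,\ t_k/r_k\to0,\ \bar x+t_kd+\tfrac12 t_kr_kw_k\in S\}$. Distance to the empty set is $+\infty$. Directional neighborhood $V_{\rho,\delta}(d):=\{w\in\delta B_{\mathbb{R}^n}\mid \|\,\|d\|w-\|w\|d\,\|\le\rho\|w\|\|d\|\}$. MSCQ at $\bar x$ in direction $d$ means there are $\rho,\delta,\kappa>0$ with $\mathrm{dist}(x,g^{-1}(K))\le\kappa\,\mathrm{dist}(g(x),K)$ for all $x\in\bar x+V_{\rho,\delta}(d)$; the modulus is the infimum of such $\kappa$. *)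

theory Defs
  imports "HOL-Analysis.Analysis"
begin

definition tangent_cone :: "'a::real_normed_vector set \<Rightarrow> 'a \<Rightarrow> 'a set" where
  "tangent_cone S x = {d. \<exists>t u. (\<forall>k. t k > 0) \<and> t \<longlonglongrightarrow> 0 \<and> u \<longlonglongrightarrow> d
       \<and> (\<forall>k. x + t k *\<^sub>R u k \<in> S)}"

definition second_order_tangent :: "'a::real_normed_vector set \<Rightarrow> 'a \<Rightarrow> 'a \<Rightarrow> 'a set" where
  "second_order_tangent S x d = {w. \<exists>t u. (\<forall>k. t k > 0) \<and> t \<longlonglongrightarrow> 0 \<and> u \<longlonglongrightarrow> w
       \<and> (\<forall>k. x + t k *\<^sub>R d + ((1/2) * (t k)\<^sup>2) *\<^sub>R u k \<in> S)}"

definition asymptotic_second_order_tangent :: "'a::real_normed_vector set \<Rightarrow> 'a \<Rightarrow> 'a \<Rightarrow> 'a set" where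
  "asymptotic_second_order_tangent S x d = {w. \<exists>t r u. (\<forall>k. t k > 0) \<and> (\<forall>k. r k > 0)
       \<and> t \<longlonglongrightarrow> 0 \<and> r \<longlonglongrightarrow> 0 \<and> (\<lambda>k. t k / r k) \<longlonglongrightarrow> 0 \<and> u \<longlonglongrightarrow> w
       \<and> (\<forall>k. x + t k *\<^sub>R d + ((1/2) * t k * r k) *\<^sub>R u k \<in> S)}"

definition edist_set :: "'a::metric_space \<Rightarrow> 'a set \<Rightarrow> ereal" where
  "edist_set x S = (if S = {} then \<infinity> else ereal (infdist x S))"

definition dir_nbhd :: "real \<Rightarrow> real \<Rightarrow> 'a::real_normed_vector \<Rightarrow> 'a set" where
  "dir_nbhd \<rho> \<delta> d = {w. norm w \<le> \<delta> \<and>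
       norm (norm d *\<^sub>R w - norm w *\<^sub>R d) \<le> \<rho> * norm w * norm d}"

text \<open>Set of constants kappa for which MSCQ holds at xbar in direction d for g(x) in K;
  MSCQ holds iff this set is nonempty, and the modulus is its infimum.\<close>
definition mscq_constants ::
  "('a::real_normed_vector \<Rightarrow> 'b::real_normed_vector) \<Rightarrow> 'b set \<Rightarrow> 'a \<Rightarrow> 'a \<Rightarrow> real set" where
  "mscq_constants g K xbar d = {\<kappa>. \<kappa> > 0 \<and> (\<exists>\<rho>>0. \<exists>\<delta>>0. \<forall>v\<in>dir_nbhd \<rho> \<delta> d.
       edist_set (xbar + v) (g -` K) \<le> ereal \<kappa> * edist_set (g (xbar + v)) K)}"

text \<open>Second derivative term nabla^2 g(x)(d,d), given the Hessians H i x of the components g_i.\<close>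
definition hess_quad :: "('m \<Rightarrow> real^'n^'n) \<Rightarrow> real^'n \<Rightarrow> real^'m" where
  "hess_quad H d = (\<chi> i. d \<bullet> (H i *v d))"

end

theory Submission
  imports Defs
begin

lemma deriv_line:
  fixes f :: "'a::real_normed_vector \<Rightarrow> real"
  assumes "(f has_derivative f') (at (a + s *\<^sub>R h))"
  shows "((\<lambda>s. f (a + s *\<^sub>R h)) has_real_derivative f' h) (at s)"
proof -
  have l: "((\<lambda>s. a + s *\<^sub>R h) has_derivative (\<lambda>s. s *\<^sub>R h)) (at s)"
    by (auto intro!: derivative_eq_intros)
  have "((\<lambda>s. f (a + s *\<^sub>R h)) has_derivative (\<lambda>s. f' (s *\<^sub>R h))) (at s)"
    using has_derivative_compose[OF l assms] by (simp add: o_def)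
  moreover have "linear f'" using assms has_derivative_linear by blast
  ultimately have "((\<lambda>s. f (a + s *\<^sub>R h)) has_derivative (\<lambda>s. s * f' h)) (at s)"
    by (simp add: linear_scale)
  then show ?thesis
    by (simp add: has_field_derivative_def mult.commute[of _ "f' h"])
qed

lemma norm_mv_le:
  fixes A :: "real^'n^'m"
  shows "norm (A *v x) \<le> real CARD('m) * real CARD('n) * norm A * norm x"
proof -
  have "onorm ((*v) A) \<le> real CARD('m) * real CARD('n) * norm A"
  proof (rule onorm_le_matrix_component)
    fix i :: 'm and j :: 'n
    have "\<bar>A $ i $ j\<bar> \<le> norm (A $ i)" by (rule component_le_norm_cart)
    also have "\<dots> \<le> norm A" by (rule Finite_Cartesian_Product.norm_nth_le)
    finally show "\<bar>A $ i $ j\<bar> \<le> norm A" .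
  qed
  moreover have "norm (A *v x) \<le> onorm ((*v) A) * norm x"
    by (rule onorm) (rule matrix_vector_mul_bounded_linear)
  ultimately show ?thesis
    by (meson mult_right_mono norm_ge_zero order_trans)
qed
lemma taylor2_scalar:
  fixes f :: "real^'n \<Rightarrow> real" and G :: "real^'n \<Rightarrow> real^'n" and Hm :: "real^'n \<Rightarrow> real^'n^'n"
  assumes df: "\<And>x. (f has_derivative (\<lambda>h. G x \<bullet> h)) (at x)"
    and dG: "\<And>x. (G has_derivative (\<lambda>h. Hm x *v h)) (at x)"
  shows "\<exists>s. 0 < s \<and> s < 1 \<and> f (a + h) = f a + G a \<bullet> h + (1/2) * ((Hm (a + s *\<^sub>R h) *v h) \<bullet> h)"
proof -
  define D :: "nat \<Rightarrow> real \<Rightarrow> real" where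
    "D = (\<lambda>m t. if m = 0 then f (a + t *\<^sub>R h) else if m = 1 then G (a + t *\<^sub>R h) \<bullet> h
            else (Hm (a + t *\<^sub>R h) *v h) \<bullet> h)"
  have d0: "\<And>t. DERIV (D 0) t :> D 1 t"
  proof -
    fix t
    have "((\<lambda>s. f (a + s *\<^sub>R h)) has_real_derivative G (a + t *\<^sub>R h) \<bullet> h) (at t)"
      by (rule deriv_line[OF df])
    then show "DERIV (D 0) t :> D 1 t" by (simp add: D_def)
  qed
  have d1: "\<And>t. DERIV (D 1) t :> D 2 t"
  proof -
    fix t
    have "((\<lambda>y. G y \<bullet> h) has_derivative (\<lambda>k. (Hm (a + t *\<^sub>R h) *v k) \<bullet> h)) (at (a + t *\<^sub>R h))"
      by (rule has_derivative_inner_left[OF dG])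
    from deriv_line[OF this]
    have "((\<lambda>s. G (a + s *\<^sub>R h) \<bullet> h) has_real_derivative (Hm (a + t *\<^sub>R h) *v h) \<bullet> h) (at t)" .
    then show "DERIV (D 1) t :> D 2 t" by (simp add: D_def)
  qed
  show ?thesis
  proof (cases "h = 0")
    case True
    then show ?thesis by (intro exI[of _ "1/2"]) simp
  next
    case False
    have "\<exists>t. (if (1::real) < 0 then 1 < t \<and> t < 0 else 0 < t \<and> t < 1) \<and>
      D 0 1 = (\<Sum>m<2. (D m 0 / fact m) * (1 - 0)^m) + (D 2 t / fact 2) * (1 - 0)^2"
      apply (rule Taylor[of 2 D "D 0" 0 1 0 1])
      using d0 d1 apply (simp_all add: numeral_2_eq_2)
      by (metis One_nat_def less_2_cases numeral_2_eq_2)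
    then obtain t where t: "0 < t" "t < 1"
      "D 0 1 = (\<Sum>m<2. (D m 0 / fact m) * (1 - 0)^m) + (D 2 t / fact 2) * (1 - 0)^2"
      by auto
    show ?thesis
      using t by (intro exI[of _ t]) (simp add: D_def numeral_2_eq_2)
  qed
qed
lemma rem2_scalar:
  fixes f :: "real^'n \<Rightarrow> real" and G :: "real^'n \<Rightarrow> real^'n" and Hm :: "real^'n \<Rightarrow> real^'n^'n"
  assumes df: "\<And>x. (f has_derivative (\<lambda>h. G x \<bullet> h)) (at x)"
    and dG: "\<And>x. (G has_derivative (\<lambda>h. Hm x *v h)) (at x)"
    and cH: "isCont Hm a" and e: "\<epsilon> > 0"
  shows "\<exists>\<delta>>0. \<forall>h. norm h < \<delta> \<longrightarrow>
     \<bar>f (a + h) - f a - G a \<bullet> h - (1/2) * (h \<bullet> (Hm a *v h))\<bar> \<le> \<epsilon> * (norm h)\<^sup>2"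
proof -
  define C where "C = real CARD('n) * real CARD('n)"
  have C: "C > 0" unfolding C_def by simp
  have "(Hm \<midarrow>a\<rightarrow> Hm a)" using cH isCont_def by blast
  then obtain \<delta> where d: "\<delta> > 0" and hd: "\<And>y. y \<noteq> a \<Longrightarrow> norm (y - a) < \<delta> \<Longrightarrow> norm (Hm y - Hm a) < \<epsilon> / C"
  proof -
    have "\<forall>r>0. \<exists>s>0. \<forall>x. x \<noteq> a \<and> norm (x - a) < s \<longrightarrow> norm (Hm x - Hm a) < r"
      using \<open>Hm \<midarrow>a\<rightarrow> Hm a\<close> LIM_eq by blast
    moreover have "\<epsilon> / C > 0" using C e by simp
    ultimately show ?thesis using that by blast
  qed
  have hd': "norm (Hm y - Hm a) \<le> \<epsilon> / C" if "norm (y - a) < \<delta>" for y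
    using hd[of y] that C e by (cases "y = a") auto
  show ?thesis
  proof (intro exI[of _ \<delta>] conjI allI impI d)
    fix h :: "real^'n" assume h: "norm h < \<delta>"
    obtain s where s: "0 < s" "s < 1" and eq: "f (a + h) = f a + G a \<bullet> h + (1/2) * ((Hm (a + s *\<^sub>R h) *v h) \<bullet> h)"
      using taylor2_scalar[OF df dG] by blast
    define M where "M = Hm (a + s *\<^sub>R h) - Hm a"
    have "norm (a + s *\<^sub>R h - a) < \<delta>" 
    proof -
      have "norm (a + s *\<^sub>R h - a) = s * norm h" using s by simp
      also have "\<dots> \<le> norm h" using s by (simp add: mult_left_le_one_le)
      finally show ?thesis using h by linarith
    qed
    then have nM: "norm M \<le> \<epsilon> / C" unfolding M_def by (rule hd')
    have "f (a + h) - f a - G a \<bullet> h - (1/2) * (h \<bullet> (Hm a *v h)) = (1/2) * ((M *v h) \<bullet> h)"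
      unfolding eq M_def by (simp add: matrix_vector_mult_diff_rdistrib inner_diff_left inner_commute[of h])
    also have "\<bar>\<dots>\<bar> \<le> (1/2) * (norm (M *v h) * norm h)"
      by (simp add: Cauchy_Schwarz_ineq2)
    also have "\<dots> \<le> (1/2) * ((C * norm M * norm h) * norm h)"
      using norm_mv_le[of M h] unfolding C_def by (intro mult_left_mono mult_right_mono) auto
    also have "\<dots> \<le> (1/2) * ((C * (\<epsilon> / C) * norm h) * norm h)"
      using nM C by (intro mult_left_mono mult_right_mono) auto
    also have "\<dots> \<le> \<epsilon> * (norm h)\<^sup>2"
      using C e by (simp add: power2_eq_square)
    finally show "\<bar>f (a + h) - f a - G a \<bullet> h - (1/2) * (h \<bullet> (Hm a *v h))\<bar> \<le> \<epsilon> * (norm h)\<^sup>2" .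
  qed
qed
lemma comp_deriv:
  fixes g :: "real^'n \<Rightarrow> real^'m" and J :: "real^'n \<Rightarrow> real^'n^'m"
  assumes "(g has_derivative (\<lambda>h. J x *v h)) (at x)"
  shows "((\<lambda>x. g x $ i) has_derivative (\<lambda>h. J x $ i \<bullet> h)) (at x)"
  using bounded_linear.has_derivative[OF bounded_linear_vec_nth[of i] assms]
  by (simp add: matrix_vector_mul_component)

lemma rem2_vec:
  fixes g :: "real^'n \<Rightarrow> real^'m" and J :: "real^'n \<Rightarrow> real^'n^'m"
    and H :: "'m \<Rightarrow> real^'n \<Rightarrow> real^'n^'n"
  assumes deriv1: "\<And>x. (g has_derivative (\<lambda>h. J x *v h)) (at x)"
    and deriv2: "\<And>i x. ((\<lambda>y. J y $ i) has_derivative (\<lambda>h. H i x *v h)) (at x)"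
    and cH: "\<And>i. isCont (H i) a" and e: "\<epsilon> > 0"
  shows "\<exists>\<delta>>0. \<forall>h. norm h < \<delta> \<longrightarrow>
     norm (g (a + h) - g a - J a *v h - (1/2) *\<^sub>R hess_quad (\<lambda>i. H i a) h) \<le> \<epsilon> * (norm h)\<^sup>2"
proof -
  define e' where "e' = \<epsilon> / real CARD('m)"
  have e': "e' > 0" unfolding e'_def using e by simp
  have "\<forall>i. \<exists>\<delta>>0. \<forall>h. norm h < \<delta> \<longrightarrow>
     \<bar>g (a + h) $ i - g a $ i - J a $ i \<bullet> h - (1/2) * (h \<bullet> (H i a *v h))\<bar> \<le> e' * (norm h)\<^sup>2"
  proof
    fix i
    show "\<exists>\<delta>>0. \<forall>h. norm h < \<delta> \<longrightarrow>
     \<bar>g (a + h) $ i - g a $ i - J a $ i \<bullet> h - (1/2) * (h \<bullet> (H i a *v h))\<bar> \<le> e' * (norm h)\<^sup>2"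
    proof (rule rem2_scalar[where f="\<lambda>x. g x $ i" and G="\<lambda>x. J x $ i" and Hm="H i"])
      show "((\<lambda>x. g x $ i) has_derivative (\<lambda>h. J x $ i \<bullet> h)) (at x)" for x
        by (rule comp_deriv[OF deriv1])
    qed (auto simp: deriv2 cH e')
  qed
  then obtain \<delta> where d: "\<And>i. \<delta> i > 0" and hd: "\<And>i h. norm h < \<delta> i \<Longrightarrow>
     \<bar>g (a + h) $ i - g a $ i - J a $ i \<bullet> h - (1/2) * (h \<bullet> (H i a *v h))\<bar> \<le> e' * (norm h)\<^sup>2"
    by metis
  define \<delta>0 where "\<delta>0 = Min (range \<delta>)"
  have d0: "\<delta>0 > 0" unfolding \<delta>0_def using d by (simp add: Min_gr_iff)
  have d0i: "\<delta>0 \<le> \<delta> i" for i unfolding \<delta>0_def by simp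
  show ?thesis
  proof (intro exI[of _ \<delta>0] conjI allI impI d0)
    fix h :: "real^'n" assume h: "norm h < \<delta>0"
    let ?v = "g (a + h) - g a - J a *v h - (1/2) *\<^sub>R hess_quad (\<lambda>i. H i a) h"
    have "norm ?v \<le> (\<Sum>i\<in>UNIV. \<bar>?v $ i\<bar>)" by (rule norm_le_l1_cart)
    also have "\<dots> \<le> (\<Sum>i\<in>(UNIV::'m set). e' * (norm h)\<^sup>2)"
    proof (rule sum_mono)
      fix i
      have "?v $ i = g (a + h) $ i - g a $ i - J a $ i \<bullet> h - (1/2) * (h \<bullet> (H i a *v h))"
        by (simp add: hess_quad_def matrix_vector_mul_component)
      then show "\<bar>?v $ i\<bar> \<le> e' * (norm h)\<^sup>2"
        using hd[of h i] h d0i[of i] by simp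
    qed
    also have "\<dots> = \<epsilon> * (norm h)\<^sup>2" unfolding e'_def by simp
    finally show "norm ?v \<le> \<epsilon> * (norm h)\<^sup>2" .
  qed
qed
lemma tendsto0_eps:
  fixes X :: "nat \<Rightarrow> 'a::real_normed_vector"
  assumes "\<And>\<epsilon>. \<epsilon> > 0 \<Longrightarrow> eventually (\<lambda>k. norm (X k) \<le> \<epsilon>) sequentially"
  shows "X \<longlonglongrightarrow> 0"
proof (rule tendstoI)
  fix e :: real assume "e > 0"
  then have "eventually (\<lambda>k. norm (X k) \<le> e/2) sequentially" by (intro assms) simp
  then show "eventually (\<lambda>k. dist (X k) 0 < e) sequentially"
    by eventually_elim (use \<open>e > 0\<close> in simp)
qed

lemma rem_seq_o2:
  fixes R :: "'a::real_normed_vector \<Rightarrow> 'b::real_normed_vector"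
  assumes R: "\<And>\<epsilon>. \<epsilon> > 0 \<Longrightarrow> \<exists>\<delta>>0. \<forall>h. norm h < \<delta> \<longrightarrow> norm (R h) \<le> \<epsilon> * (norm h)\<^sup>2"
    and h0: "h \<longlonglongrightarrow> 0" and B: "B > 0"
    and hb: "eventually (\<lambda>k. norm (h k) \<le> B * t k) sequentially"
    and t: "\<And>k. t k > 0"
  shows "(\<lambda>k. (1 / (t k)\<^sup>2) *\<^sub>R R (h k)) \<longlonglongrightarrow> 0"
proof (rule tendsto0_eps)
  fix \<epsilon> :: real assume e: "\<epsilon> > 0"
  obtain \<delta> where d: "\<delta> > 0" and hd: "\<And>h. norm h < \<delta> \<Longrightarrow> norm (R h) \<le> (\<epsilon> / B\<^sup>2) * (norm h)\<^sup>2"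
    using R[of "\<epsilon> / B\<^sup>2"] e B by auto
  have "eventually (\<lambda>k. dist (h k) 0 < \<delta>) sequentially" using h0 d tendstoD by blast
  with hb show "eventually (\<lambda>k. norm ((1 / (t k)\<^sup>2) *\<^sub>R R (h k)) \<le> \<epsilon>) sequentially"
  proof eventually_elim
    case (elim k)
    have tk: "t k > 0" by (rule t)
    have "norm (R (h k)) \<le> (\<epsilon> / B\<^sup>2) * (norm (h k))\<^sup>2" using hd elim by simp
    also have "\<dots> \<le> (\<epsilon> / B\<^sup>2) * (B * t k)\<^sup>2"
      using elim e B by (intro mult_left_mono power_mono) auto
    also have "\<dots> = \<epsilon> * (t k)\<^sup>2" using B by (simp add: power_mult_distrib)
    finally have "norm (R (h k)) \<le> \<epsilon> * (t k)\<^sup>2" .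
    then show ?case using tk by (simp add: field_simps)
  qed
qed

lemma rem_seq_O2:
  fixes R :: "'a::real_normed_vector \<Rightarrow> 'b::real_normed_vector"
  assumes R: "\<exists>\<delta>>0. \<forall>h. norm h < \<delta> \<longrightarrow> norm (R h) \<le> M * (norm h)\<^sup>2"
    and h0: "h \<longlonglongrightarrow> 0" and B: "B > 0"
    and hb: "eventually (\<lambda>k. norm (h k) \<le> B * t k) sequentially"
    and t: "\<And>k. t k > 0" and r: "\<And>k. r k > 0" and tr: "(\<lambda>k. t k / r k) \<longlonglongrightarrow> 0"
  shows "(\<lambda>k. (1 / (t k * r k)) *\<^sub>R R (h k)) \<longlonglongrightarrow> 0"
proof (rule tendsto0_eps)
  fix \<epsilon> :: real assume e: "\<epsilon> > 0"
  obtain \<delta> where d: "\<delta> > 0" and hd: "\<And>h. norm h < \<delta> \<Longrightarrow> norm (R h) \<le> M * (norm h)\<^sup>2"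
    using R by auto
  define M' where "M' = max M 1"
  have M': "M' > 0" "M \<le> M'" unfolding M'_def by auto
  have "eventually (\<lambda>k. dist (h k) 0 < \<delta>) sequentially" using h0 d tendstoD by blast
  moreover have "eventually (\<lambda>k. dist (t k / r k) 0 < \<epsilon> / (M' * B\<^sup>2)) sequentially"
    using tendstoD[OF tr] e M' B by simp
  ultimately show "eventually (\<lambda>k. norm ((1 / (t k * r k)) *\<^sub>R R (h k)) \<le> \<epsilon>) sequentially"
    using hb
  proof eventually_elim
    case (elim k)
    have tk: "t k > 0" by (rule t)
    have rk: "r k > 0" by (rule r)
    have "norm (R (h k)) \<le> M * (norm (h k))\<^sup>2" using hd elim by simp
    also have "\<dots> \<le> M' * (norm (h k))\<^sup>2" using M' by (intro mult_right_mono) auto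
    also have "\<dots> \<le> M' * (B * t k)\<^sup>2"
      using elim M' B by (intro mult_left_mono power_mono) auto
    finally have 1: "norm (R (h k)) \<le> M' * B\<^sup>2 * (t k)\<^sup>2" by (simp add: power_mult_distrib)
    have 2: "t k / r k < \<epsilon> / (M' * B\<^sup>2)" using elim tk rk by simp
    have "norm ((1 / (t k * r k)) *\<^sub>R R (h k)) = norm (R (h k)) / (t k * r k)"
      using tk rk by simp
    also have "\<dots> \<le> M' * B\<^sup>2 * (t k)\<^sup>2 / (t k * r k)"
      using 1 tk rk by (simp add: divide_right_mono)
    also have "\<dots> = (M' * B\<^sup>2) * (t k / r k)" using tk rk by (simp add: power2_eq_square)
    also have "\<dots> \<le> (M' * B\<^sup>2) * (\<epsilon> / (M' * B\<^sup>2))"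
      using 2 M' B by (intro mult_left_mono) auto
    also have "\<dots> = \<epsilon>" using M' B by simp
    finally show ?case .
  qed
qed
lemma hq_scale: "hess_quad A (c *\<^sub>R v) = (c\<^sup>2) *\<^sub>R hess_quad A v"
  by (simp add: hess_quad_def vec_eq_iff matrix_vector_mult_scaleR power2_eq_square)

lemma hq_tendsto:
  assumes "(v \<longlongrightarrow> v0) F"
  shows "((\<lambda>k. hess_quad A (v k)) \<longlongrightarrow> hess_quad A v0) F"
  unfolding hess_quad_def
proof (rule vec_tendstoI)
  fix i
  have "((\<lambda>k. A i *v v k) \<longlongrightarrow> A i *v v0) F"
    by (rule bounded_linear.tendsto[OF matrix_vector_mul_bounded_linear assms])
  then show "((\<lambda>k. (\<chi> i. v k \<bullet> (A i *v v k)) $ i) \<longlongrightarrow> (\<chi> i. v0 \<bullet> (A i *v v0)) $ i) F"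
    using assms by (simp add: tendsto_inner)
qed

lemma hq_bound:
  fixes A :: "'m::finite \<Rightarrow> real^'n^'n"
  shows "\<exists>M. \<forall>h. norm (hess_quad A h) \<le> M * (norm h)\<^sup>2"
proof -
  define M where "M = (\<Sum>i\<in>UNIV. real CARD('n) * real CARD('n) * norm (A i))"
  show ?thesis
  proof (intro exI[of _ "M"] allI)
    fix h :: "real^'n"
    have "norm (hess_quad A h) \<le> (\<Sum>i\<in>UNIV. \<bar>hess_quad A h $ i\<bar>)" by (rule norm_le_l1_cart)
    also have "\<dots> \<le> (\<Sum>i\<in>UNIV. real CARD('n) * real CARD('n) * norm (A i) * (norm h)\<^sup>2)"
    proof (rule sum_mono)
      fix i
      have "\<bar>hess_quad A h $ i\<bar> = \<bar>h \<bullet> (A i *v h)\<bar>" by (simp add: hess_quad_def)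
      also have "\<dots> \<le> norm h * norm (A i *v h)" by (rule Cauchy_Schwarz_ineq2)
      also have "\<dots> \<le> norm h * (real CARD('n) * real CARD('n) * norm (A i) * norm h)"
        by (intro mult_left_mono norm_mv_le) auto
      finally show "\<bar>hess_quad A h $ i\<bar> \<le> real CARD('n) * real CARD('n) * norm (A i) * (norm h)\<^sup>2"
        by (simp add: power2_eq_square algebra_simps)
    qed
    also have "\<dots> = M * (norm h)\<^sup>2" unfolding M_def by (simp add: sum_distrib_right)
    finally show "norm (hess_quad A h) \<le> M * (norm h)\<^sup>2" .
  qed
qed
lemma seq_bound_aux:
  assumes t: "\<And>k. t k > (0::real)" and t0: "t \<longlonglongrightarrow> 0" and u: "u \<longlonglongrightarrow> (u0::'a::real_normed_vector)"
  shows "eventually (\<lambda>k. t k < 1 \<and> norm (u k) \<le> norm u0 + 1) sequentially"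
proof -
  have "eventually (\<lambda>k. t k < 1) sequentially" using t0 by (simp add: order_tendstoD(2))
  moreover have "eventually (\<lambda>k. dist (u k) u0 < 1) sequentially" using u by (simp add: tendstoD)
  ultimately show ?thesis
  proof eventually_elim
    case (elim k)
    then show ?case using norm_triangle_ineq2[of "u k" u0] by (simp add: dist_norm)
  qed
qed

lemma seq2:
  fixes g :: "real^'n \<Rightarrow> real^'m" and J :: "real^'n \<Rightarrow> real^'n^'m"
    and H :: "'m \<Rightarrow> real^'n \<Rightarrow> real^'n^'n"
  assumes deriv1: "\<And>x. (g has_derivative (\<lambda>h. J x *v h)) (at x)"
    and deriv2: "\<And>i x. ((\<lambda>y. J y $ i) has_derivative (\<lambda>h. H i x *v h)) (at x)"
    and cH: "\<And>i. isCont (H i) a"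
    and t: "\<And>k. t k > 0" and t0: "t \<longlonglongrightarrow> 0" and u: "u \<longlonglongrightarrow> u0"
  shows "(\<lambda>k. (2 / (t k)\<^sup>2) *\<^sub>R (g (a + t k *\<^sub>R d + ((1/2) * (t k)\<^sup>2) *\<^sub>R u k) - g a - t k *\<^sub>R (J a *v d)))
          \<longlonglongrightarrow> J a *v u0 + hess_quad (\<lambda>i. H i a) d"
proof -
  define R where "R h = g (a + h) - g a - J a *v h - (1/2) *\<^sub>R hess_quad (\<lambda>i. H i a) h" for h
  define w where "w k = d + (t k / 2) *\<^sub>R u k" for k
  define h where "h k = t k *\<^sub>R w k" for k
  have hk: "t k *\<^sub>R d + ((1/2) * (t k)\<^sup>2) *\<^sub>R u k = h k" for k
    unfolding h_def w_def by (simp add: scaleR_add_right power2_eq_square)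
  have eq: "(2 / (t k)\<^sup>2) *\<^sub>R (g (a + t k *\<^sub>R d + ((1/2) * (t k)\<^sup>2) *\<^sub>R u k) - g a - t k *\<^sub>R (J a *v d))
      = J a *v u k + hess_quad (\<lambda>i. H i a) (w k) + (2 *\<^sub>R ((1 / (t k)\<^sup>2) *\<^sub>R R (h k)))" for k
  proof -
    have tk: "t k \<noteq> 0" using t[of k] by simp
    have "g (a + h k) - g a - t k *\<^sub>R (J a *v d) =
        ((1/2) * (t k)\<^sup>2) *\<^sub>R (J a *v u k) + ((1/2) * (t k)\<^sup>2) *\<^sub>R hess_quad (\<lambda>i. H i a) (w k) + R (h k)"
      unfolding R_def h_def hq_scale
      by (simp add: w_def matrix_vector_right_distrib matrix_vector_mult_scaleR scaleR_add_right power2_eq_square algebra_simps)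
    moreover have "g (a + t k *\<^sub>R d + ((1/2) * (t k)\<^sup>2) *\<^sub>R u k) = g (a + h k)"
      by (simp add: hk[symmetric] add.assoc)
    moreover have "(2 / (t k)\<^sup>2) * ((1/2) * (t k)\<^sup>2) = 1" using tk by simp
    ultimately show ?thesis
      by (simp only: scaleR_add_right scaleR_scaleR) simp
  qed
  have R: "\<exists>\<delta>>0. \<forall>h. norm h < \<delta> \<longrightarrow> norm (R h) \<le> \<epsilon> * (norm h)\<^sup>2" if "\<epsilon> > 0" for \<epsilon>
    unfolding R_def using rem2_vec[OF deriv1 deriv2 cH that] by blast
  have w0: "w \<longlonglongrightarrow> d" unfolding w_def using t0 u by (auto intro!: tendsto_eq_intros)
  have h0: "h \<longlonglongrightarrow> 0" unfolding h_def using t0 w0 by (auto intro!: tendsto_eq_intros)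
  define B where "B = norm d + norm u0 + 1"
  have B: "B > 0" unfolding B_def by (simp add: add_nonneg_pos)
  have hb: "eventually (\<lambda>k. norm (h k) \<le> B * t k) sequentially"
    using seq_bound_aux[OF t t0 u]
  proof eventually_elim
    case (elim k)
    have tk: "t k > 0" by (rule t)
    have "norm (w k) \<le> norm d + (t k / 2) * norm (u k)"
      unfolding w_def using tk norm_triangle_ineq[of d "(t k / 2) *\<^sub>R u k"] by simp
    also have "\<dots> \<le> B"
    proof -
      have "(t k / 2) * norm (u k) \<le> norm (u k)"
        using elim tk by (intro mult_left_le_one_le) auto
      then show ?thesis unfolding B_def using elim by linarith
    qed
    finally show ?case unfolding h_def using tk by (simp add: mult.commute)
  qed
  have lim: "(\<lambda>k. J a *v u k + hess_quad (\<lambda>i. H i a) (w k) + (2 *\<^sub>R ((1 / (t k)\<^sup>2) *\<^sub>R R (h k))))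
      \<longlonglongrightarrow> J a *v u0 + hess_quad (\<lambda>i. H i a) d + 2 *\<^sub>R 0"
    by (intro tendsto_intros bounded_linear.tendsto[OF matrix_vector_mul_bounded_linear] u hq_tendsto w0
        rem_seq_o2[OF R h0 B hb t])
  show ?thesis by (subst ext[OF eq]) (use lim in simp)
qed
lemma rem1_O2:
  fixes g :: "real^'n \<Rightarrow> real^'m" and J :: "real^'n \<Rightarrow> real^'n^'m"
    and H :: "'m \<Rightarrow> real^'n \<Rightarrow> real^'n^'n"
  assumes deriv1: "\<And>x. (g has_derivative (\<lambda>h. J x *v h)) (at x)"
    and deriv2: "\<And>i x. ((\<lambda>y. J y $ i) has_derivative (\<lambda>h. H i x *v h)) (at x)"
    and cH: "\<And>i. isCont (H i) a"
  shows "\<exists>M. \<exists>\<delta>>0. \<forall>h. norm h < \<delta> \<longrightarrow> norm (g (a + h) - g a - J a *v h) \<le> M * (norm h)\<^sup>2"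
proof -
  obtain \<delta> where d: "\<delta> > 0" and hd: "\<And>h. norm h < \<delta> \<Longrightarrow>
     norm (g (a + h) - g a - J a *v h - (1/2) *\<^sub>R hess_quad (\<lambda>i. H i a) h) \<le> 1 * (norm h)\<^sup>2"
    using rem2_vec[OF deriv1 deriv2 cH, of 1] by auto
  obtain M where M: "\<And>h. norm (hess_quad (\<lambda>i. H i a) h) \<le> M * (norm h)\<^sup>2"
    using hq_bound by blast
  show ?thesis
  proof (rule exI[of _ "1 + \<bar>M\<bar>"], rule exI[of _ \<delta>], intro conjI allI impI d)
    fix h :: "real^'n" assume h: "norm h < \<delta>"
    have "norm (g (a + h) - g a - J a *v h) \<le>
        norm (g (a + h) - g a - J a *v h - (1/2) *\<^sub>R hess_quad (\<lambda>i. H i a) h) + norm ((1/2) *\<^sub>R hess_quad (\<lambda>i. H i a) h)"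
      using norm_triangle_ineq[of "g (a + h) - g a - J a *v h - (1/2) *\<^sub>R hess_quad (\<lambda>i. H i a) h"
          "(1/2) *\<^sub>R hess_quad (\<lambda>i. H i a) h"] by simp
    also have "\<dots> \<le> 1 * (norm h)\<^sup>2 + (1/2) * (M * (norm h)\<^sup>2)"
      using hd[OF h] M[of h] by simp
    also have "\<dots> \<le> (1 + \<bar>M\<bar>) * (norm h)\<^sup>2"
    proof -
      have "M * (norm h)\<^sup>2 \<le> \<bar>M\<bar> * (norm h)\<^sup>2" by (intro mult_right_mono) auto
      moreover have "0 \<le> \<bar>M\<bar> * (norm h)\<^sup>2" by simp
      moreover have "(1 + \<bar>M\<bar>) * (norm h)\<^sup>2 = (norm h)\<^sup>2 + \<bar>M\<bar> * (norm h)\<^sup>2"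
        by (simp add: distrib_right)
      ultimately show ?thesis by linarith
    qed
    finally show "norm (g (a + h) - g a - J a *v h) \<le> (1 + \<bar>M\<bar>) * (norm h)\<^sup>2" .
  qed
qed

lemma seqpp:
  fixes g :: "real^'n \<Rightarrow> real^'m" and J :: "real^'n \<Rightarrow> real^'n^'m"
    and H :: "'m \<Rightarrow> real^'n \<Rightarrow> real^'n^'n"
  assumes deriv1: "\<And>x. (g has_derivative (\<lambda>h. J x *v h)) (at x)"
    and deriv2: "\<And>i x. ((\<lambda>y. J y $ i) has_derivative (\<lambda>h. H i x *v h)) (at x)"
    and cH: "\<And>i. isCont (H i) a"
    and t: "\<And>k. t k > 0" and r: "\<And>k. r k > 0" and t0: "t \<longlonglongrightarrow> 0" and r0: "r \<longlonglongrightarrow> 0"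
    and tr: "(\<lambda>k. t k / r k) \<longlonglongrightarrow> 0" and u: "u \<longlonglongrightarrow> u0"
  shows "(\<lambda>k. (2 / (t k * r k)) *\<^sub>R (g (a + t k *\<^sub>R d + ((1/2) * t k * r k) *\<^sub>R u k) - g a - t k *\<^sub>R (J a *v d)))
          \<longlonglongrightarrow> J a *v u0"
proof -
  define R where "R h = g (a + h) - g a - J a *v h" for h
  define h where "h k = t k *\<^sub>R d + ((1/2) * t k * r k) *\<^sub>R u k" for k
  have eq: "(2 / (t k * r k)) *\<^sub>R (g (a + t k *\<^sub>R d + ((1/2) * t k * r k) *\<^sub>R u k) - g a - t k *\<^sub>R (J a *v d))
      = J a *v u k + (2 *\<^sub>R ((1 / (t k * r k)) *\<^sub>R R (h k)))" for k
  proof -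
    have tk: "t k \<noteq> 0" "r k \<noteq> 0" using t[of k] r[of k] by auto
    have "g (a + h k) - g a - t k *\<^sub>R (J a *v d) = ((1/2) * t k * r k) *\<^sub>R (J a *v u k) + R (h k)"
      unfolding R_def h_def
      by (simp add: matrix_vector_right_distrib matrix_vector_mult_scaleR algebra_simps)
    moreover have "g (a + t k *\<^sub>R d + ((1/2) * t k * r k) *\<^sub>R u k) = g (a + h k)"
      by (simp add: h_def add.assoc)
    moreover have "(2 / (t k * r k)) * ((1/2) * t k * r k) = 1" using tk by simp
    ultimately show ?thesis
      by (simp only: scaleR_add_right scaleR_scaleR) simp
  qed
  obtain M where R: "\<exists>\<delta>>0. \<forall>h. norm h < \<delta> \<longrightarrow> norm (R h) \<le> M * (norm h)\<^sup>2"
    unfolding R_def using rem1_O2[OF deriv1 deriv2 cH] by blast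
  have h0: "h \<longlonglongrightarrow> 0" unfolding h_def using t0 r0 u by (auto intro!: tendsto_eq_intros)
  define B where "B = norm d + norm u0 + 1"
  have B: "B > 0" unfolding B_def by (simp add: add_nonneg_pos)
  have hb: "eventually (\<lambda>k. norm (h k) \<le> B * t k) sequentially"
    using seq_bound_aux[OF r r0 u]
  proof eventually_elim
    case (elim k)
    have tk: "t k > 0" by (rule t)
    have rk: "r k > 0" by (rule r)
    have "norm (h k) \<le> norm (t k *\<^sub>R d) + norm (((1/2) * t k * r k) *\<^sub>R u k)"
      unfolding h_def by (rule norm_triangle_ineq)
    also have "\<dots> = t k * (norm d + (r k / 2) * norm (u k))" using tk rk by (simp add: algebra_simps)
    also have "\<dots> \<le> t k * B"
    proof -
      have "(r k / 2) * norm (u k) \<le> norm (u k)"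
        using elim rk by (intro mult_left_le_one_le) auto
      then have "norm d + (r k / 2) * norm (u k) \<le> B" unfolding B_def using elim by linarith
      then show ?thesis using tk by (intro mult_left_mono) auto
    qed
    finally show ?case by (simp add: mult.commute)
  qed
  have lim: "(\<lambda>k. J a *v u k + (2 *\<^sub>R ((1 / (t k * r k)) *\<^sub>R R (h k)))) \<longlonglongrightarrow> J a *v u0 + 2 *\<^sub>R 0"
    by (intro tendsto_intros bounded_linear.tendsto[OF matrix_vector_mul_bounded_linear] u
        rem_seq_O2[OF R h0 B hb t r tr])
  show ?thesis by (subst ext[OF eq]) (use lim in simp)
qed
lemma dir_aux:
  fixes d s :: "'a::real_normed_vector"
  assumes rho: "\<rho> > 0" and tp: "t > 0" and s: "d = 0 \<or> norm s \<le> \<rho> * norm d / (2 + \<rho>)"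
  shows "norm (norm d *\<^sub>R (t *\<^sub>R (d + s)) - norm (t *\<^sub>R (d + s)) *\<^sub>R d) \<le> \<rho> * norm (t *\<^sub>R (d + s)) * norm d"
proof (cases "d = 0")
  case True then show ?thesis by simp
next
  case False
  with s have s': "(2 + \<rho>) * norm s \<le> \<rho> * norm d" using rho by (simp add: field_simps)
  have "norm d *\<^sub>R (t *\<^sub>R (d + s)) - norm (t *\<^sub>R (d + s)) *\<^sub>R d
      = t *\<^sub>R (norm d *\<^sub>R s + (norm d - norm (d + s)) *\<^sub>R d)"
  proof -
    have n1: "norm (t *\<^sub>R (d + s)) = t * norm (d + s)" using tp by simp
    show ?thesis unfolding n1
      by (simp add: scaleR_add_right scaleR_diff_left scaleR_diff_right algebra_simps)
  qed
  then have "norm (norm d *\<^sub>R (t *\<^sub>R (d + s)) - norm (t *\<^sub>R (d + s)) *\<^sub>R d)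
      = t * norm (norm d *\<^sub>R s + (norm d - norm (d + s)) *\<^sub>R d)"
    using tp by simp
  also have "\<dots> \<le> t * (norm d * norm s + \<bar>norm d - norm (d + s)\<bar> * norm d)"
    using tp by (intro mult_left_mono) (auto intro: order_trans[OF norm_triangle_ineq])
  also have "\<dots> \<le> t * (norm d * norm s + norm s * norm d)"
  proof -
    have "\<bar>norm d - norm (d + s)\<bar> \<le> norm s"
      using norm_triangle_ineq3[of d "d + s"] by (simp add: norm_minus_commute)
    then show ?thesis using tp by (intro mult_left_mono add_left_mono mult_right_mono) auto
  qed
  also have "\<dots> \<le> t * (\<rho> * (norm d - norm s) * norm d)"
  proof -
    have "2 * norm s \<le> \<rho> * (norm d - norm s)" using s' by (simp add: algebra_simps)
    then have "2 * norm s * norm d \<le> \<rho> * (norm d - norm s) * norm d"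
      by (intro mult_right_mono) auto
    then show ?thesis using tp by (intro mult_left_mono) (auto simp: algebra_simps)
  qed
  also have "\<dots> \<le> t * (\<rho> * norm (d + s) * norm d)"
  proof -
    have "norm d - norm s \<le> norm (d + s)"
      using norm_triangle_ineq2[of d "-s"] by simp
    then show ?thesis using tp rho by (intro mult_left_mono mult_right_mono) auto
  qed
  also have "\<dots> = \<rho> * norm (t *\<^sub>R (d + s)) * norm d" using tp by simp
  finally show ?thesis .
qed
lemma core:
  fixes g :: "'a::euclidean_space \<Rightarrow> 'b::euclidean_space"
  assumes closedC: "closed (g -` K)" and xC: "xbar \<in> g -` K"
    and kp: "\<kappa>' > 0" and rp: "\<rho> > 0" and dp: "\<delta> > 0"
    and ms: "\<forall>v\<in>dir_nbhd \<rho> \<delta> d. edist_set (xbar + v) (g -` K) \<le> ereal \<kappa>' * edist_set (g (xbar + v)) K"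
    and t: "\<And>k. t k > 0" and sg: "\<And>k. \<sigma> k > 0" and t0: "t \<longlonglongrightarrow> 0" and st: "(\<lambda>k. \<sigma> k / t k) \<longlonglongrightarrow> 0"
    and e: "(\<lambda>k. (1 / \<sigma> k) *\<^sub>R (g (xbar + t k *\<^sub>R d + \<sigma> k *\<^sub>R w) - g xbar - t k *\<^sub>R b)) \<longlonglongrightarrow> e0"
    and z: "z \<longlonglongrightarrow> z0" and zK: "\<And>k. g xbar + t k *\<^sub>R b + \<sigma> k *\<^sub>R z k \<in> K"
  shows "\<exists>w' \<phi> ws. strict_mono \<phi> \<and> (ws \<circ> \<phi>) \<longlonglongrightarrow> w' \<and> (\<forall>k. xbar + t k *\<^sub>R d + \<sigma> k *\<^sub>R ws k \<in> g -` K)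
      \<and> norm (w' - w) \<le> \<kappa>' * norm (e0 - z0)"
proof -
  define C where "C = g -` K"
  have Cne: "C \<noteq> {}" using xC C_def by auto
  have Kne: "K \<noteq> {}" using xC by auto
  have cC: "closed C" using closedC C_def by simp
  define x where "x k = xbar + t k *\<^sub>R d + \<sigma> k *\<^sub>R w" for k
  define s where "s k = (\<sigma> k / t k) *\<^sub>R w" for k
  define v where "v k = t k *\<^sub>R (d + s k)" for k
  define ee where "ee k = (1 / \<sigma> k) *\<^sub>R (g (x k) - g xbar - t k *\<^sub>R b)" for k
  have ee: "ee \<longlonglongrightarrow> e0" using e unfolding ee_def x_def .
  have xv: "x k = xbar + v k" for k
    using t[of k] unfolding x_def v_def s_def by (simp add: scaleR_add_right add.assoc)
  have s0: "s \<longlonglongrightarrow> 0" unfolding s_def using tendsto_scaleR[OF st tendsto_const[of w]] by simp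
  have v0: "v \<longlonglongrightarrow> 0" unfolding v_def using t0 s0 by (auto intro!: tendsto_eq_intros)
  have ev1: "eventually (\<lambda>k. norm (v k) < \<delta>) sequentially"
    using tendstoD[OF v0 dp] by simp
  have ev2: "eventually (\<lambda>k. d = 0 \<or> norm (s k) \<le> \<rho> * norm d / (2 + \<rho>)) sequentially"
  proof (cases "d = 0")
    case True then show ?thesis by simp
  next
    case False
    then have "\<rho> * norm d / (2 + \<rho>) > 0" using rp by simp
    from tendstoD[OF s0 this] have "eventually (\<lambda>k. norm (s k) < \<rho> * norm d / (2 + \<rho>)) sequentially"
      by simp
    then show ?thesis by eventually_elim simp
  qed
  have evV: "eventually (\<lambda>k. v k \<in> dir_nbhd \<rho> \<delta> d) sequentially"
    using ev1 ev2
  proof eventually_elim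
    case (elim k)
    show ?case unfolding dir_nbhd_def
      using elim dir_aux[OF rp t[of k] elim(2)] unfolding v_def by simp
  qed
  have "\<forall>k. \<exists>y. y \<in> C \<and> infdist (x k) C = dist (x k) y"
    using infdist_attains_inf[OF cC Cne] by metis
  then obtain y where yC: "\<And>k. y k \<in> C" and yd: "\<And>k. infdist (x k) C = dist (x k) (y k)"
    by metis
  define ws where "ws k = (1 / \<sigma> k) *\<^sub>R (y k - xbar - t k *\<^sub>R d)" for k
  have memb: "xbar + t k *\<^sub>R d + \<sigma> k *\<^sub>R ws k \<in> g -` K" for k
  proof -
    have "\<sigma> k *\<^sub>R ws k = y k - xbar - t k *\<^sub>R d" using sg[of k] unfolding ws_def by simp
    then show ?thesis using yC[of k] C_def by (simp add: algebra_simps)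
  qed
  have evB: "eventually (\<lambda>k. norm (ws k - w) \<le> \<kappa>' * norm (ee k - z k)) sequentially"
    using evV
  proof eventually_elim
    case (elim k)
    have sk: "\<sigma> k > 0" by (rule sg)
    have "edist_set (xbar + v k) C \<le> ereal \<kappa>' * edist_set (g (xbar + v k)) K"
      using ms elim C_def by blast
    then have i1: "infdist (x k) C \<le> \<kappa>' * infdist (g (x k)) K"
      using Cne Kne by (simp add: edist_set_def xv)
    have gx: "g (x k) = g xbar + t k *\<^sub>R b + \<sigma> k *\<^sub>R ee k"
      using sk unfolding ee_def by simp
    have "infdist (g (x k)) K \<le> dist (g (x k)) (g xbar + t k *\<^sub>R b + \<sigma> k *\<^sub>R z k)"
      by (rule infdist_le[OF zK])
    also have "\<dots> = \<sigma> k * norm (ee k - z k)"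
      unfolding gx dist_norm using sk by (simp add: scaleR_diff_right[symmetric])
    finally have i2: "infdist (g (x k)) K \<le> \<sigma> k * norm (ee k - z k)" .
    have "ws k - w = (1 / \<sigma> k) *\<^sub>R (y k - x k)"
      using sk unfolding ws_def x_def by (simp add: algebra_simps)
    then have "norm (ws k - w) = dist (x k) (y k) / \<sigma> k"
      using sk by (simp add: dist_norm norm_minus_commute)
    also have "\<dots> = infdist (x k) C / \<sigma> k" by (simp add: yd)
    also have "\<dots> \<le> \<kappa>' * (\<sigma> k * norm (ee k - z k)) / \<sigma> k"
      using i1 i2 kp sk by (intro divide_right_mono) (auto intro: order_trans mult_left_mono)
    also have "\<dots> = \<kappa>' * norm (ee k - z k)" using sk by simp
    finally show ?case .
  qed
  have lim2: "(\<lambda>k. norm w + \<kappa>' * norm (ee k - z k)) \<longlonglongrightarrow> norm w + \<kappa>' * norm (e0 - z0)"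
    using ee z by (auto intro!: tendsto_intros)
  have "Bseq ws"
  proof (rule Bseq_eventually_mono[OF _ convergent_imp_Bseq[OF convergentI[OF lim2]]])
    show "eventually (\<lambda>k. norm (ws k) \<le> norm (norm w + \<kappa>' * norm (ee k - z k))) sequentially"
      using evB
    proof eventually_elim
      case (elim k)
      have "norm (ws k) \<le> norm w + norm (ws k - w)" using norm_triangle_ineq[of w "ws k - w"] by simp
      also have "\<dots> \<le> norm w + \<kappa>' * norm (ee k - z k)" using elim by simp
      also have "\<dots> \<le> norm (norm w + \<kappa>' * norm (ee k - z k))" by simp
      finally show ?case .
    qed
  qed
  then have "bounded (range ws)" by (simp add: Bseq_eq_bounded)
  then obtain w' \<phi> where phi: "strict_mono \<phi>" and wl: "(ws \<circ> \<phi>) \<longlonglongrightarrow> w'"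
    using bounded_imp_convergent_subsequence by blast
  have "norm (w' - w) \<le> \<kappa>' * norm (e0 - z0)"
  proof (rule tendsto_le[OF trivial_limit_sequentially])
    show "(\<lambda>k. \<kappa>' * norm (ee (\<phi> k) - z (\<phi> k))) \<longlonglongrightarrow> \<kappa>' * norm (e0 - z0)"
      using LIMSEQ_subseq_LIMSEQ[OF ee phi] LIMSEQ_subseq_LIMSEQ[OF z phi]
      by (auto intro!: tendsto_intros simp: o_def)
    show "(\<lambda>k. norm ((ws \<circ> \<phi>) k - w)) \<longlonglongrightarrow> norm (w' - w)"
      using wl by (auto intro!: tendsto_intros simp: o_def)
    show "eventually (\<lambda>k. norm ((ws \<circ> \<phi>) k - w) \<le> \<kappa>' * norm (ee (\<phi> k) - z (\<phi> k))) sequentially"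
      using eventually_subseq[OF phi evB] by simp
  qed
  then show ?thesis using phi wl memb by blast
qed
lemma lip_local:
  fixes g :: "real^'n \<Rightarrow> real^'m" and J :: "real^'n \<Rightarrow> real^'n^'m"
    and H :: "'m \<Rightarrow> real^'n \<Rightarrow> real^'n^'n"
  assumes deriv1: "\<And>x. (g has_derivative (\<lambda>h. J x *v h)) (at x)"
    and deriv2: "\<And>i x. ((\<lambda>y. J y $ i) has_derivative (\<lambda>h. H i x *v h)) (at x)"
  shows "\<exists>L>0. \<forall>x y. x \<in> cball a r \<longrightarrow> y \<in> cball a r \<longrightarrow> norm (g x - g y) \<le> L * norm (x - y)"
proof -
  have "continuous_on UNIV (\<lambda>x. \<chi> i. J x $ i)"
  proof (rule continuous_on_vec_lambda)
    fix i
    show "continuous_on UNIV (\<lambda>x. J x $ i)"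
      using deriv2 has_derivative_continuous continuous_at_imp_continuous_on by blast
  qed
  then have cJ: "continuous_on UNIV J" by simp
  have "compact (J ` cball a r)"
    by (rule compact_continuous_image[OF continuous_on_subset[OF cJ]]) auto
  then obtain Bd where Bd: "\<And>x. x \<in> cball a r \<Longrightarrow> norm (J x) \<le> Bd"
    using compact_imp_bounded bounded_iff by (metis imageI)
  define L where "L = real CARD('m) * real CARD('n) * max Bd 0 + 1"
  have L: "L > 0" unfolding L_def by (simp add: add_nonneg_pos)
  have "norm (g x - g y) \<le> L * norm (x - y)" if "x \<in> cball a r" "y \<in> cball a r" for x y
  proof (rule differentiable_bound[OF convex_cball])
    show "(g has_derivative (\<lambda>h. J z *v h)) (at z within cball a r)" for z
      by (rule has_derivative_at_withinI[OF deriv1])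
    show "onorm (\<lambda>h. J z *v h) \<le> L" if "z \<in> cball a r" for z
    proof -
      have "onorm ((*v) (J z)) \<le> real CARD('m) * real CARD('n) * norm (J z)"
      proof (rule onorm_le_matrix_component)
        fix i :: 'm and j :: 'n
        have "\<bar>J z $ i $ j\<bar> \<le> norm (J z $ i)" by (rule component_le_norm_cart)
        also have "\<dots> \<le> norm (J z)" by (rule Finite_Cartesian_Product.norm_nth_le)
        finally show "\<bar>J z $ i $ j\<bar> \<le> norm (J z)" .
      qed
      also have "\<dots> \<le> real CARD('m) * real CARD('n) * max Bd 0"
        using Bd[OF that] by (intro mult_left_mono) auto
      also have "\<dots> \<le> L" unfolding L_def by simp
      finally show ?thesis by simp
    qed
  qed (use that in auto)
  then show ?thesis using L by blast
qed
lemma kappa_lower: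
  fixes g :: "'a::euclidean_space \<Rightarrow> 'b::euclidean_space"
  assumes closedC: "closed (g -` K)" and xC: "xbar \<in> g -` K"
    and ms: "\<forall>v\<in>dir_nbhd \<rho> \<delta> d. edist_set (xbar + v) (g -` K) \<le> ereal \<kappa>' * edist_set (g (xbar + v)) K"
    and kp: "\<kappa>' > 0"
    and L: "L > 0" and lip: "\<forall>x y. x \<in> cball xbar 2 \<longrightarrow> y \<in> cball xbar 2 \<longrightarrow> norm (g x - g y) \<le> L * norm (x - y)"
    and notall: "\<not> (\<forall>v\<in>dir_nbhd \<rho> (min \<delta> 1) d. xbar + v \<in> g -` K)"
  shows "1 / L \<le> \<kappa>'"
proof -
  define C where "C = g -` K"
  have Cne: "C \<noteq> {}" using xC C_def by auto
  have Kne: "K \<noteq> {}" using xC by auto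
  have cC: "closed C" using closedC C_def by simp
  obtain v where v: "v \<in> dir_nbhd \<rho> (min \<delta> 1) d" and vC: "xbar + v \<notin> C"
    using notall C_def by blast
  have v1: "norm v \<le> 1" and vd: "v \<in> dir_nbhd \<rho> \<delta> d" using v by (auto simp: dir_nbhd_def)
  define x where "x = xbar + v"
  obtain y where yC: "y \<in> C" and yd: "infdist x C = dist x y"
    using infdist_attains_inf[OF cC Cne] by metis
  have Dpos: "infdist x C > 0"
    using vC cC Cne x_def in_closed_iff_infdist_zero infdist_nonneg by (metis less_eq_real_def)
  have "infdist x C \<le> dist x xbar" using infdist_le[of xbar C] xC C_def by simp
  then have dxy: "dist x y \<le> 1" using yd v1 x_def by (simp add: dist_norm)
  have xb: "x \<in> cball xbar 2" using v1 x_def by (simp add: dist_norm)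
  have yb: "y \<in> cball xbar 2"
  proof -
    have "dist xbar y \<le> dist xbar x + dist x y" by (rule dist_triangle)
    also have "\<dots> \<le> 2" using v1 dxy x_def by (simp add: dist_norm)
    finally show ?thesis by simp
  qed
  have "edist_set (xbar + v) C \<le> ereal \<kappa>' * edist_set (g (xbar + v)) K"
    using ms vd C_def by blast
  then have i1: "infdist x C \<le> \<kappa>' * infdist (g x) K"
    using Cne Kne by (simp add: edist_set_def x_def)
  have "infdist (g x) K \<le> dist (g x) (g y)"
    using infdist_le[of "g y" K] yC C_def by simp
  also have "\<dots> \<le> L * dist x y" using lip xb yb by (simp add: dist_norm)
  finally have "infdist x C \<le> \<kappa>' * (L * infdist x C)"
    using i1 kp yd by (smt (verit) mult_left_mono)
  then have "1 * infdist x C \<le> (\<kappa>' * L) * infdist x C" by (simp add: algebra_simps)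
  then have "1 \<le> \<kappa>' * L" using Dpos by (simp add: mult_le_cancel_right)
  then show ?thesis using L by (simp add: field_simps)
qed

lemma allin:
  fixes C :: "'a::real_normed_vector set"
  assumes rp: "\<rho> > 0" and dp: "\<delta> > 0" and all: "\<forall>v\<in>dir_nbhd \<rho> \<delta> d. xbar + v \<in> C"
  shows "0 \<in> second_order_tangent C xbar d" "0 \<in> asymptotic_second_order_tangent C xbar d"
proof -
  define \<tau> where "\<tau> = \<delta> / (norm d + 1)"
  have tau: "\<tau> > 0" unfolding \<tau>_def using dp by (simp add: add_nonneg_pos)
  define t where "t k = \<tau> / real (Suc k)" for k
  have t: "t k > 0" for k unfolding t_def using tau by simp
  have t0: "t \<longlonglongrightarrow> 0" unfolding t_def using LIMSEQ_Suc[OF lim_const_over_n[of \<tau>]] by simp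
  have mem: "xbar + t k *\<^sub>R d \<in> C" for k
  proof -
    have "t k \<le> \<tau>" unfolding t_def using tau by (simp add: divide_le_eq)
    then have "t k * norm d \<le> \<tau> * norm d" by (simp add: mult_right_mono)
    also have "\<dots> \<le> \<delta>"
    proof -
      have "\<delta> * norm d \<le> \<delta> * (norm d + 1)" using dp by simp
      then show ?thesis unfolding \<tau>_def by (simp add: divide_le_eq add_nonneg_pos)
    qed
    finally have A: "norm (t k *\<^sub>R d) \<le> \<delta>" using t[of k] by simp
    have B: "norm (norm d *\<^sub>R (t k *\<^sub>R d) - norm (t k *\<^sub>R d) *\<^sub>R d) = 0"
      using t[of k] by simp
    have Cc: "0 \<le> \<rho> * norm (t k *\<^sub>R d) * norm d" using rp by simp
    have "t k *\<^sub>R d \<in> dir_nbhd \<rho> \<delta> d"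
      unfolding dir_nbhd_def mem_Collect_eq using A B Cc by linarith
    then show ?thesis using all by blast
  qed
  show "0 \<in> second_order_tangent C xbar d"
    unfolding second_order_tangent_def
    using t t0 mem by (intro CollectI exI[of _ t] exI[of _ "\<lambda>k. 0"]) auto
  define r where "r k = sqrt (t k)" for k
  have r: "r k > 0" for k unfolding r_def using t by simp
  have r0: "r \<longlonglongrightarrow> 0" unfolding r_def using tendsto_real_sqrt[OF t0] by simp
  have tr: "(\<lambda>k. t k / r k) = r" unfolding r_def using t by (auto simp: fun_eq_iff real_div_sqrt less_imp_le)
  show "0 \<in> asymptotic_second_order_tangent C xbar d"
    unfolding asymptotic_second_order_tangent_def
    using t t0 r r0 mem tr by (intro CollectI exI[of _ t] exI[of _ r] exI[of _ "\<lambda>k. 0"]) auto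
qed
lemma abstract_mscq:
  fixes TC :: "'a::real_normed_vector set" and TK :: "'b::real_normed_vector set" and S :: "real set"
  assumes Sne: "S \<noteq> {}" and Spos: "\<forall>k\<in>S. k > 0" and kap: "\<kappa> = Inf S"
    and inc: "TC \<subseteq> {w. E w \<in> TK}"
    and core: "\<And>k w z. k \<in> S \<Longrightarrow> z \<in> TK \<Longrightarrow> \<exists>w'\<in>TC. norm (w' - w) \<le> k * norm (E w - z)"
    and pos: "TK = {} \<Longrightarrow> \<kappa> > 0"
  shows "TC = {w. E w \<in> TK}"
    and "\<forall>w. edist_set w TC \<le> ereal \<kappa> * edist_set (E w) TK"
proof -
  obtain k0 where k0: "k0 \<in> S" using Sne by blast
  show "TC = {w. E w \<in> TK}"
  proof
    show "TC \<subseteq> {w. E w \<in> TK}" by (rule inc)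
    show "{w. E w \<in> TK} \<subseteq> TC"
    proof
      fix w assume "w \<in> {w. E w \<in> TK}"
      then obtain w' where "w' \<in> TC" "norm (w' - w) \<le> k0 * norm (E w - E w)"
        using core[OF k0] by blast
      then show "w \<in> TC" by simp
    qed
  qed
  show "\<forall>w. edist_set w TC \<le> ereal \<kappa> * edist_set (E w) TK"
  proof
    fix w
    show "edist_set w TC \<le> ereal \<kappa> * edist_set (E w) TK"
    proof (cases "TK = {}")
      case True
      then have "TC = {}" using inc by auto
      then show ?thesis using True pos by (simp add: edist_set_def)
    next
      case False
      then obtain z where "z \<in> TK" by blast
      then have TCne: "TC \<noteq> {}" using core[OF k0] by blast
      define X where "X = infdist w TC"
      define D where "D = infdist (E w) TK"
      have D0: "D \<ge> 0" unfolding D_def by (rule infdist_nonneg)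
      have XD: "X \<le> k * D" if kS: "k \<in> S" for k
      proof -
        have kp: "k > 0" using Spos kS by blast
        have "X / k \<le> dist (E w) z" if zT: "z \<in> TK" for z
        proof -
          obtain w' where w': "w' \<in> TC" "norm (w' - w) \<le> k * norm (E w - z)"
            using core[OF kS zT] by blast
          have "X \<le> dist w w'" unfolding X_def by (rule infdist_le[OF w'(1)])
          also have "\<dots> \<le> k * dist (E w) z" using w'(2) by (simp add: dist_norm norm_minus_commute)
          finally show ?thesis using kp by (simp add: field_simps)
        qed
        then have "X / k \<le> D" unfolding D_def infdist_notempty[OF False]
          by (intro cINF_greatest[OF False])
        then show ?thesis using kp by (simp add: field_simps)
      qed
      have "X \<le> \<kappa> * D"
      proof (cases "D = 0")
        case True
        then show ?thesis using XD[OF k0] by simp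
      next
        case False
        then have Dp: "D > 0" using D0 by simp
        have "X / D \<le> Inf S"
          by (rule cInf_greatest[OF Sne]) (use XD Dp in \<open>simp add: field_simps\<close>)
        then show ?thesis using Dp kap by (simp add: field_simps)
      qed
      then show ?thesis using False TCne unfolding X_def D_def by (simp add: edist_set_def)
    qed
  qed
qed

theorem proposition2p7:
  fixes g :: "real^'n \<Rightarrow> real^'m"
    and J :: "real^'n \<Rightarrow> real^'n^'m"
    and H :: "'m \<Rightarrow> real^'n \<Rightarrow> real^'n^'n"
    and K :: "(real^'m) set"
    and xbar d :: "real^'n"
    and \<kappa> :: real
  assumes deriv1: "\<And>x. (g has_derivative (\<lambda>h. J x *v h)) (at x)"
    and deriv2: "\<And>i x. ((\<lambda>y. J y $ i) has_derivative (\<lambda>h. H i x *v h)) (at x)"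
    and contH: "\<And>i. continuous_on UNIV (H i)"
    and closedK: "closed K"
    and xbar: "xbar \<in> g -` K"
    and d: "d \<in> tangent_cone (g -` K) xbar"
  shows "second_order_tangent (g -` K) xbar d \<subseteq>
           {w. J xbar *v w + hess_quad (\<lambda>i. H i xbar) d
                 \<in> second_order_tangent K (g xbar) (J xbar *v d)}
       \<and> asymptotic_second_order_tangent (g -` K) xbar d \<subseteq>
           {w. J xbar *v w \<in> asymptotic_second_order_tangent K (g xbar) (J xbar *v d)}
       \<and> ((mscq_constants g K xbar d \<noteq> {} \<and> \<kappa> = Inf (mscq_constants g K xbar d)) \<longrightarrow>
            (second_order_tangent (g -` K) xbar d =
               {w. J xbar *v w + hess_quad (\<lambda>i. H i xbar) d
                     \<in> second_order_tangent K (g xbar) (J xbar *v d)}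
           \<and> asymptotic_second_order_tangent (g -` K) xbar d =
               {w. J xbar *v w \<in> asymptotic_second_order_tangent K (g xbar) (J xbar *v d)}
           \<and> (\<forall>w. edist_set w (second_order_tangent (g -` K) xbar d)
                  \<le> ereal \<kappa> * edist_set (J xbar *v w + hess_quad (\<lambda>i. H i xbar) d)
                                (second_order_tangent K (g xbar) (J xbar *v d)))
           \<and> (\<forall>w. edist_set w (asymptotic_second_order_tangent (g -` K) xbar d)
                  \<le> ereal \<kappa> * edist_set (J xbar *v w)
                                (asymptotic_second_order_tangent K (g xbar) (J xbar *v d)))))"
proof -
  define C where "C = g -` K"
  define b where "b = J xbar *v d"
  define E2 where "E2 w = J xbar *v w + hess_quad (\<lambda>i. H i xbar) d" for w
  define EP where "EP w = J xbar *v w" for w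
  define T2C where "T2C = second_order_tangent C xbar d"
  define T2K where "T2K = second_order_tangent K (g xbar) b"
  define TPC where "TPC = asymptotic_second_order_tangent C xbar d"
  define TPK where "TPK = asymptotic_second_order_tangent K (g xbar) b"
  have cH: "\<And>i. isCont (H i) xbar"
    using contH by (simp add: continuous_on_eq_continuous_at)
  have contg: "continuous_on UNIV g"
    using deriv1 has_derivative_continuous continuous_at_imp_continuous_on by blast
  have closedC: "closed C" unfolding C_def by (rule closed_vimage[OF closedK contg])
  have xC: "xbar \<in> C" using xbar C_def by simp
  have inc1: "T2C \<subseteq> {w. E2 w \<in> T2K}"
  proof
    fix w assume "w \<in> T2C"
    then obtain t u where t: "\<And>k. t k > 0" and t0: "t \<longlonglongrightarrow> 0" and u: "u \<longlonglongrightarrow> w"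
      and mem: "\<And>k. xbar + t k *\<^sub>R d + ((1/2) * (t k)\<^sup>2) *\<^sub>R u k \<in> C"
      unfolding T2C_def second_order_tangent_def by blast
    define z where "z k = (2 / (t k)\<^sup>2) *\<^sub>R (g (xbar + t k *\<^sub>R d + ((1/2) * (t k)\<^sup>2) *\<^sub>R u k) - g xbar - t k *\<^sub>R b)" for k
    have z: "z \<longlonglongrightarrow> E2 w" unfolding z_def E2_def b_def
      by (rule seq2[OF deriv1 deriv2 cH t t0 u])
    have "g xbar + t k *\<^sub>R b + ((1/2) * (t k)\<^sup>2) *\<^sub>R z k \<in> K" for k
    proof -
      have "((1/2) * (t k)\<^sup>2) *\<^sub>R z k = g (xbar + t k *\<^sub>R d + ((1/2) * (t k)\<^sup>2) *\<^sub>R u k) - g xbar - t k *\<^sub>R b"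
        unfolding z_def using t[of k] by simp
      then show ?thesis using mem[of k] C_def by simp
    qed
    then show "w \<in> {w. E2 w \<in> T2K}"
      unfolding T2K_def second_order_tangent_def using t t0 z by blast
  qed
  have inc2: "TPC \<subseteq> {w. EP w \<in> TPK}"
  proof
    fix w assume "w \<in> TPC"
    then obtain t r u where t: "\<And>k. t k > 0" and r: "\<And>k. r k > 0" and t0: "t \<longlonglongrightarrow> 0"
      and r0: "r \<longlonglongrightarrow> 0" and tr: "(\<lambda>k. t k / r k) \<longlonglongrightarrow> 0" and u: "u \<longlonglongrightarrow> w"
      and mem: "\<And>k. xbar + t k *\<^sub>R d + ((1/2) * t k * r k) *\<^sub>R u k \<in> C"
      unfolding TPC_def asymptotic_second_order_tangent_def by blast
    define z where "z k = (2 / (t k * r k)) *\<^sub>R (g (xbar + t k *\<^sub>R d + ((1/2) * t k * r k) *\<^sub>R u k) - g xbar - t k *\<^sub>R b)" for k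
    have z: "z \<longlonglongrightarrow> EP w" unfolding z_def EP_def b_def
      by (rule seqpp[OF deriv1 deriv2 cH t r t0 r0 tr u])
    have "g xbar + t k *\<^sub>R b + ((1/2) * t k * r k) *\<^sub>R z k \<in> K" for k
    proof -
      have "((1/2) * t k * r k) *\<^sub>R z k = g (xbar + t k *\<^sub>R d + ((1/2) * t k * r k) *\<^sub>R u k) - g xbar - t k *\<^sub>R b"
        unfolding z_def using t[of k] r[of k] by simp
      then show ?thesis using mem[of k] C_def by simp
    qed
    then show "w \<in> {w. EP w \<in> TPK}"
      unfolding TPK_def asymptotic_second_order_tangent_def using t r t0 r0 tr z by blast
  qed
  have ms_obtain: "\<exists>\<rho>>0. \<exists>\<delta>>0. \<forall>v\<in>dir_nbhd \<rho> \<delta> d.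
       edist_set (xbar + v) C \<le> ereal k * edist_set (g (xbar + v)) K"
    if "k \<in> mscq_constants g K xbar d" for k
    using that unfolding mscq_constants_def C_def by blast
  have kpos: "k > 0" if "k \<in> mscq_constants g K xbar d" for k
    using that unfolding mscq_constants_def by blast
  have core2: "\<exists>w'\<in>T2C. norm (w' - w) \<le> k * norm (E2 w - z0)"
    if kS: "k \<in> mscq_constants g K xbar d" and z0: "z0 \<in> T2K" for k w z0
  proof -
    obtain \<rho> \<delta> where rp: "\<rho> > 0" and dp: "\<delta> > 0" and ms: "\<forall>v\<in>dir_nbhd \<rho> \<delta> d.
       edist_set (xbar + v) (g -` K) \<le> ereal k * edist_set (g (xbar + v)) K"
      using ms_obtain[OF kS] C_def by blast
    obtain t z where t: "\<And>k. t k > 0" and t0: "t \<longlonglongrightarrow> 0" and z: "z \<longlonglongrightarrow> z0"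
      and zK: "\<And>k. g xbar + t k *\<^sub>R b + ((1/2) * (t k)\<^sup>2) *\<^sub>R z k \<in> K"
      using z0 unfolding T2K_def second_order_tangent_def by blast
    define \<sigma> where "\<sigma> k = (1/2) * (t k)\<^sup>2" for k
    have sg: "\<sigma> k > 0" for k unfolding \<sigma>_def using t[of k] by simp
    have st: "(\<lambda>k. \<sigma> k / t k) \<longlonglongrightarrow> 0"
    proof -
      have "(\<lambda>k. \<sigma> k / t k) = (\<lambda>k. t k / 2)" using t by (auto simp: \<sigma>_def fun_eq_iff power2_eq_square)
      moreover have "(\<lambda>k. t k / 2) \<longlonglongrightarrow> 0" using tendsto_divide[OF t0 tendsto_const[of 2]] by simp
      ultimately show ?thesis by simp
    qed
    have e: "(\<lambda>k. (1 / \<sigma> k) *\<^sub>R (g (xbar + t k *\<^sub>R d + \<sigma> k *\<^sub>R w) - g xbar - t k *\<^sub>R b)) \<longlonglongrightarrow> E2 w"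
    proof -
      have "(\<lambda>k. (2 / (t k)\<^sup>2) *\<^sub>R (g (xbar + t k *\<^sub>R d + ((1/2) * (t k)\<^sup>2) *\<^sub>R w) - g xbar - t k *\<^sub>R (J xbar *v d)))
          \<longlonglongrightarrow> J xbar *v w + hess_quad (\<lambda>i. H i xbar) d"
        by (rule seq2[OF deriv1 deriv2 cH t t0 tendsto_const])
      then show ?thesis unfolding \<sigma>_def E2_def b_def by simp
    qed
    have zK': "\<And>k. g xbar + t k *\<^sub>R b + \<sigma> k *\<^sub>R z k \<in> K" using zK unfolding \<sigma>_def .
    obtain w' \<phi> ws where phi: "strict_mono \<phi>" and wl: "(ws \<circ> \<phi>) \<longlonglongrightarrow> w'"
      and mem: "\<forall>k. xbar + t k *\<^sub>R d + \<sigma> k *\<^sub>R ws k \<in> g -` K"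
      and bd: "norm (w' - w) \<le> k * norm (E2 w - z0)"
      using core[OF closedC[unfolded C_def] xbar kpos[OF kS] rp dp ms t sg t0 st e z zK'] by blast
    have "w' \<in> T2C"
      unfolding T2C_def second_order_tangent_def
    proof (intro CollectI exI conjI allI)
      show "(t \<circ> \<phi>) k > 0" for k using t by simp
      show "(t \<circ> \<phi>) \<longlonglongrightarrow> 0" by (rule LIMSEQ_subseq_LIMSEQ[OF t0 phi])
      show "(ws \<circ> \<phi>) \<longlonglongrightarrow> w'" by (rule wl)
      show "xbar + (t \<circ> \<phi>) k *\<^sub>R d + ((1/2) * ((t \<circ> \<phi>) k)\<^sup>2) *\<^sub>R (ws \<circ> \<phi>) k \<in> C" for k
        using mem C_def unfolding \<sigma>_def by simp
    qed
    then show ?thesis using bd by blast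
  qed
  have coreP: "\<exists>w'\<in>TPC. norm (w' - w) \<le> k * norm (EP w - z0)"
    if kS: "k \<in> mscq_constants g K xbar d" and z0: "z0 \<in> TPK" for k w z0
  proof -
    obtain \<rho> \<delta> where rp: "\<rho> > 0" and dp: "\<delta> > 0" and ms: "\<forall>v\<in>dir_nbhd \<rho> \<delta> d.
       edist_set (xbar + v) (g -` K) \<le> ereal k * edist_set (g (xbar + v)) K"
      using ms_obtain[OF kS] C_def by blast
    obtain t r z where t: "\<And>k. t k > 0" and r: "\<And>k. r k > 0" and t0: "t \<longlonglongrightarrow> 0"
      and r0: "r \<longlonglongrightarrow> 0" and tr: "(\<lambda>k. t k / r k) \<longlonglongrightarrow> 0" and z: "z \<longlonglongrightarrow> z0"
      and zK: "\<And>k. g xbar + t k *\<^sub>R b + ((1/2) * t k * r k) *\<^sub>R z k \<in> K"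
      using z0 unfolding TPK_def asymptotic_second_order_tangent_def by blast
    define \<sigma> where "\<sigma> k = (1/2) * t k * r k" for k
    have sg: "\<sigma> k > 0" for k unfolding \<sigma>_def using t[of k] r[of k] by simp
    have st: "(\<lambda>k. \<sigma> k / t k) \<longlonglongrightarrow> 0"
    proof -
      have tn: "t k \<noteq> 0" for k using t[of k] by simp
      have "(\<lambda>k. \<sigma> k / t k) = (\<lambda>k. r k / 2)" using tn by (auto simp: \<sigma>_def fun_eq_iff)
      moreover have "(\<lambda>k. r k / 2) \<longlonglongrightarrow> 0" using tendsto_divide[OF r0 tendsto_const[of 2]] by simp
      ultimately show ?thesis by simp
    qed
    have e: "(\<lambda>k. (1 / \<sigma> k) *\<^sub>R (g (xbar + t k *\<^sub>R d + \<sigma> k *\<^sub>R w) - g xbar - t k *\<^sub>R b)) \<longlonglongrightarrow> EP w"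
    proof -
      have "(\<lambda>k. (2 / (t k * r k)) *\<^sub>R (g (xbar + t k *\<^sub>R d + ((1/2) * t k * r k) *\<^sub>R w) - g xbar - t k *\<^sub>R (J xbar *v d)))
          \<longlonglongrightarrow> J xbar *v w"
        by (rule seqpp[OF deriv1 deriv2 cH t r t0 r0 tr tendsto_const])
      then show ?thesis unfolding \<sigma>_def EP_def b_def by simp
    qed
    have zK': "\<And>k. g xbar + t k *\<^sub>R b + \<sigma> k *\<^sub>R z k \<in> K" using zK unfolding \<sigma>_def .
    obtain w' \<phi> ws where phi: "strict_mono \<phi>" and wl: "(ws \<circ> \<phi>) \<longlonglongrightarrow> w'"
      and mem: "\<forall>k. xbar + t k *\<^sub>R d + \<sigma> k *\<^sub>R ws k \<in> g -` K"
      and bd: "norm (w' - w) \<le> k * norm (EP w - z0)"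
      using core[OF closedC[unfolded C_def] xbar kpos[OF kS] rp dp ms t sg t0 st e z zK'] by blast
    have "w' \<in> TPC"
      unfolding TPC_def asymptotic_second_order_tangent_def
    proof (intro CollectI exI conjI allI)
      show "(t \<circ> \<phi>) k > 0" for k using t by simp
      show "(r \<circ> \<phi>) k > 0" for k using r by simp
      show "(t \<circ> \<phi>) \<longlonglongrightarrow> 0" by (rule LIMSEQ_subseq_LIMSEQ[OF t0 phi])
      show "(r \<circ> \<phi>) \<longlonglongrightarrow> 0" by (rule LIMSEQ_subseq_LIMSEQ[OF r0 phi])
      show "(\<lambda>k. (t \<circ> \<phi>) k / (r \<circ> \<phi>) k) \<longlonglongrightarrow> 0"
        using LIMSEQ_subseq_LIMSEQ[OF tr phi] by (simp add: o_def)
      show "(ws \<circ> \<phi>) \<longlonglongrightarrow> w'" by (rule wl)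
      show "xbar + (t \<circ> \<phi>) k *\<^sub>R d + ((1/2) * (t \<circ> \<phi>) k * (r \<circ> \<phi>) k) *\<^sub>R (ws \<circ> \<phi>) k \<in> C" for k
        using mem C_def unfolding \<sigma>_def by simp
    qed
    then show ?thesis using bd by blast
  qed
  obtain L where L: "L > 0" and lip: "\<forall>x y. x \<in> cball xbar 2 \<longrightarrow> y \<in> cball xbar 2 \<longrightarrow> norm (g x - g y) \<le> L * norm (x - y)"
    using lip_local[OF deriv1 deriv2] by blast
  have posgen: "Inf (mscq_constants g K xbar d) > 0"
    if Sne: "mscq_constants g K xbar d \<noteq> {}" and notin: "0 \<notin> T2C \<or> 0 \<notin> TPC"
  proof -
    have "1 / L \<le> Inf (mscq_constants g K xbar d)"
    proof (rule cInf_greatest[OF Sne])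
      fix k assume kS: "k \<in> mscq_constants g K xbar d"
      obtain \<rho> \<delta> where rp: "\<rho> > 0" and dp: "\<delta> > 0" and ms: "\<forall>v\<in>dir_nbhd \<rho> \<delta> d.
         edist_set (xbar + v) (g -` K) \<le> ereal k * edist_set (g (xbar + v)) K"
        using ms_obtain[OF kS] C_def by blast
      have "\<not> (\<forall>v\<in>dir_nbhd \<rho> (min \<delta> 1) d. xbar + v \<in> g -` K)"
      proof
        assume "\<forall>v\<in>dir_nbhd \<rho> (min \<delta> 1) d. xbar + v \<in> g -` K"
        from allin[OF rp _ this] dp have "0 \<in> T2C" "0 \<in> TPC"
          unfolding T2C_def TPC_def C_def by auto
        then show False using notin by blast
      qed
      then show "1 / L \<le> k"
        using kappa_lower[OF closedC[unfolded C_def] xbar ms kpos[OF kS] L lip] by blast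
    qed
    moreover have "1 / L > 0" using L by simp
    ultimately show ?thesis by linarith
  qed
  show ?thesis
    unfolding C_def[symmetric] b_def[symmetric]
  proof (intro conjI impI)
    show "second_order_tangent C xbar d \<subseteq> {w. J xbar *v w + hess_quad (\<lambda>i. H i xbar) d \<in> second_order_tangent K (g xbar) b}"
      using inc1 unfolding T2C_def T2K_def E2_def .
    show "asymptotic_second_order_tangent C xbar d \<subseteq> {w. J xbar *v w \<in> asymptotic_second_order_tangent K (g xbar) b}"
      using inc2 unfolding TPC_def TPK_def EP_def .
    assume A: "mscq_constants g K xbar d \<noteq> {} \<and> \<kappa> = Inf (mscq_constants g K xbar d)"
    have Spos: "\<forall>k\<in>mscq_constants g K xbar d. k > 0" using kpos by blast
    have pos2: "\<kappa> > 0" if "T2K = {}"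
    proof -
      have "0 \<notin> T2C" using inc1 that by auto
      then show ?thesis using posgen A by blast
    qed
    have posP: "\<kappa> > 0" if "TPK = {}"
    proof -
      have "0 \<notin> TPC" using inc2 that by auto
      then show ?thesis using posgen A by blast
    qed
    note R2 = abstract_mscq[OF conjunct1[OF A] Spos conjunct2[OF A] inc1 core2 pos2]
    note RP = abstract_mscq[OF conjunct1[OF A] Spos conjunct2[OF A] inc2 coreP posP]
    show "second_order_tangent C xbar d = {w. J xbar *v w + hess_quad (\<lambda>i. H i xbar) d \<in> second_order_tangent K (g xbar) b}"
      using R2(1) unfolding T2C_def T2K_def E2_def .
    show "asymptotic_second_order_tangent C xbar d = {w. J xbar *v w \<in> asymptotic_second_order_tangent K (g xbar) b}"
      using RP(1) unfolding TPC_def TPK_def EP_def .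
    show "\<forall>w. edist_set w (second_order_tangent C xbar d) \<le> ereal \<kappa> * edist_set (J xbar *v w + hess_quad (\<lambda>i. H i xbar) d) (second_order_tangent K (g xbar) b)"
      using R2(2) unfolding T2C_def T2K_def E2_def .
    show "\<forall>w. edist_set w (asymptotic_second_order_tangent C xbar d) \<le> ereal \<kappa> * edist_set (J xbar *v w) (asymptotic_second_order_tangent K (g xbar) b)"
      using RP(2) unfolding TPC_def TPK_def EP_def .
  qed
qed
end
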